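(* Let $T\subseteq\{0,1\}^n$ be nonempty, $\delta\in[0,1]$, $\varepsilon\ge0$, and let $f:\{0,1\}^n\to\mathbb{R}$ satisfy $f(x)=0$ for $x\notin T$ and $|f(x)|\le1+\varepsilon$ for $x\in T$. Define $\widetilde f(S):=\widehat f(S)\cdot 2^n/|T|$ for $S\subseteq[n]$. Then $$\sum_{S\subseteq[n]}\delta^{|S|}\,\widetilde f(S)^2\le(1+\varepsilon)^2\left(\frac{2^n}{|T|}\right)^{2\delta}.$$
   Context: Fourier coefficients: $\widehat f(S):=2^{-n}\sum_{x\in\{0,1\}^n}f(x)\chi_S(x)$ with $\chi_S(x)=(-1)^{\sum_{j\in S}x_j}$; the convention $0^0=1$ is used for $\delta=0$. *)

theory Defs
  imports "HOL-Analysis.Analysis"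
begin

text \<open>The Boolean cube {0,1}^n is represented by subsets of {..<n}: a point x
  is identified with the set of coordinates j where x_j = 1.\<close>

definition cube :: "nat \<Rightarrow> nat set set" where
  "cube n = Pow {..<n}"

definition chi :: "nat set \<Rightarrow> nat set \<Rightarrow> real" where
  "chi S x = (-1) ^ card (S \<inter> x)"

definition fourier :: "nat \<Rightarrow> (nat set \<Rightarrow> real) \<Rightarrow> nat set \<Rightarrow> real" where
  "fourier n f S = (\<Sum>x\<in>cube n. f x * chi S x) / 2 ^ n"

end

theory Submission
  imports Defs
begin


lemma bern_powr:
  fixes r z :: real
  assumes "r \<ge> 1" "z \<ge> 0"
  shows "1 + r * z \<le> (1 + z) powr r"
proof -
  have "(\<lambda>w. (1 + w) powr r - r * w) 0 \<le> (\<lambda>w. (1 + w) powr r - r * w) z"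
  proof (rule DERIV_nonneg_imp_increasing_open[OF assms(2)])
    fix x :: real assume x: "0 < x" "x < z"
    have "((\<lambda>w. (1 + w) powr r - r * w) has_real_derivative r * (1 + x) powr (r - 1) - r) (at x)"
      using x by (auto intro!: derivative_eq_intros)
    moreover have "(1 + x) powr (r - 1) \<ge> 1" using x assms by (simp add: ge_one_powr_ge_zero)
    ultimately show "\<exists>y. ((\<lambda>w. (1 + w) powr r - r * w) has_real_derivative y) (at x) \<and> 0 \<le> y"
      using assms by (intro exI[of _ "r * (1 + x) powr (r - 1) - r"]) (auto simp: mult_le_cancel_left1)
  next
    show "continuous_on {0..z} (\<lambda>w. (1 + w) powr r - r * w)"
      by (intro continuous_intros) auto
  qed
  then show ?thesis by simp
qed

lemma kpp:
  fixes p t :: real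
  assumes p: "1 \<le> p" "p \<le> 2" and t: "0 \<le> t" "t < 1"
  shows "2 \<le> (1 + t) powr (p - 2) + (1 - t) powr (p - 2)"
proof -
  have "(1 - t\<^sup>2) powr (p - 2) \<ge> 1"
  proof -
    have "(1 - t\<^sup>2) powr (2 - p) \<le> 1" using t p
      by (intro powr_le1) (auto simp: power2_eq_square abs_le_iff mult_le_one)
    moreover have "(1 - t\<^sup>2) > 0" using t mult_left_le_one_le[of t t] by (simp add: power2_eq_square)
    ultimately show ?thesis using powr_minus[of "1 - t\<^sup>2" "2 - p"]
      by (simp add: one_le_inverse_iff)
  qed
  hence "sqrt ((1 - t\<^sup>2) powr (p - 2)) \<ge> 1" by simp
  moreover have "(1 - t\<^sup>2) powr (p - 2) = (1 + t) powr (p - 2) * (1 - t) powr (p - 2)"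
    using t by (simp add: powr_mult[symmetric] power2_eq_square algebra_simps)
  moreover have "2 * sqrt (a * b) \<le> a + b" if "a \<ge> 0" "b \<ge> 0" for a b :: real
    using arith_geo_mean_sqrt[OF that] by simp
  ultimately show ?thesis by (smt (verit) powr_ge_zero)
qed

lemma kp:
  fixes p t :: real
  assumes p: "1 \<le> p" "p \<le> 2" and t: "0 \<le> t" "t < 1"
  shows "2 * (p - 1) * t \<le> (1 + t) powr (p - 1) - (1 - t) powr (p - 1)"
proof -
  let ?g = "\<lambda>w. (1 + w) powr (p - 1) - (1 - w) powr (p - 1) - 2 * (p - 1) * w"
  have "?g 0 \<le> ?g t"
  proof (rule DERIV_nonneg_imp_increasing_open[OF t(1)])
    fix x :: real assume x: "0 < x" "x < t"
    have "(?g has_real_derivative (p - 1) * ((1 + x) powr (p - 1 - 1) + (1 - x) powr (p - 1 - 1)) - 2 * (p - 1)) (at x)"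
      using x t by (auto intro!: derivative_eq_intros simp: algebra_simps)
    moreover have "2 \<le> (1 + x) powr (p - 2) + (1 - x) powr (p - 2)"
      using kpp[OF p, of x] x t by simp
    hence "(p - 1) * 2 \<le> (p - 1) * ((1 + x) powr (p - 2) + (1 - x) powr (p - 2))"
      using p by (intro mult_left_mono) auto
    ultimately show "\<exists>y. (?g has_real_derivative y) (at x) \<and> 0 \<le> y"
      by (intro exI[of _ "(p - 1) * ((1 + x) powr (p - 1 - 1) + (1 - x) powr (p - 1 - 1)) - 2 * (p - 1)"]) auto
  next
    show "continuous_on {0..t} ?g" using t
      by (intro continuous_intros) auto
  qed
  then show ?thesis by simp
qed

lemma kk:
  fixes p t :: real
  assumes p: "1 \<le> p" "p \<le> 2" and t: "0 \<le> t" "t \<le> 1"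
  shows "2 + p * (p - 1) * t\<^sup>2 \<le> (1 + t) powr p + (1 - t) powr p"
proof -
  let ?g = "\<lambda>w. (1 + w) powr p + (1 - w) powr p - p * (p - 1) * w\<^sup>2"
  have "?g 0 \<le> ?g t"
  proof (rule DERIV_nonneg_imp_increasing_open[OF t(1)])
    fix x :: real assume x: "0 < x" "x < t"
    have "(?g has_real_derivative p * ((1 + x) powr (p - 1) - (1 - x) powr (p - 1)) - p * (p - 1) * (2 * x)) (at x)"
      using x t by (auto intro!: derivative_eq_intros simp: algebra_simps)
    moreover have "p * (2 * (p - 1) * x) \<le> p * ((1 + x) powr (p - 1) - (1 - x) powr (p - 1))"
      using kp[OF p, of x] x t p by (intro mult_left_mono) auto
    ultimately show "\<exists>y. (?g has_real_derivative y) (at x) \<and> 0 \<le> y"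
      by (intro exI[of _ "p * ((1 + x) powr (p - 1) - (1 - x) powr (p - 1)) - p * (p - 1) * (2 * x)"]) (auto simp: algebra_simps)
  next
    show "continuous_on {0..t} ?g" using t p
      by (intro continuous_intros continuous_on_powr') auto
  qed
  then show ?thesis by simp
qed

lemma tp_le:
  fixes p \<delta> x y :: real
  assumes p: "1 \<le> p" "p \<le> 2" and d: "0 \<le> \<delta>" "\<delta> \<le> p - 1" and xy: "0 \<le> y" "y \<le> x"
  shows "(1 + \<delta>) * (x\<^sup>2 + y\<^sup>2) + 2 * (1 - \<delta>) * (x * y)
         \<le> 4 powr (1 - 1 / p) * (x powr p + y powr p) powr (2 / p)"
proof (cases "x = 0")
  case True
  with xy have "y = 0" by simp
  with True show ?thesis by simp
next
  case False
  hence xpos: "x > 0" using xy by simp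
  define s where "s = (x + y) / 2"
  define t where "t = (x - y) / (x + y)"
  have spos: "s > 0" using xpos xy by (simp add: s_def)
  have t01: "0 \<le> t" "t \<le> 1" using xpos xy by (auto simp: t_def divide_simps)
  have xe: "x = s * (1 + t)" and ye: "y = s * (1 - t)"
    using xpos xy by (auto simp: s_def t_def field_simps)
  have lhs: "(1 + \<delta>) * (x\<^sup>2 + y\<^sup>2) + 2 * (1 - \<delta>) * (x * y) = 4 * s\<^sup>2 * (1 + \<delta> * t\<^sup>2)"
    unfolding xe ye by (simp add: power2_eq_square algebra_simps)
  define z where "z = p * (p - 1) * t\<^sup>2 / 2"
  have z0: "z \<ge> 0" using p by (simp add: z_def)
  have sum: "x powr p + y powr p = s powr p * ((1 + t) powr p + (1 - t) powr p)"
    unfolding xe ye using spos t01 by (simp add: powr_mult[symmetric] distrib_left del: distrib_left_numeral)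
  have "2 * (1 + z) \<le> (1 + t) powr p + (1 - t) powr p"
    using kk[OF p t01] unfolding z_def by simp
  hence "s powr p * (2 * (1 + z)) \<le> x powr p + y powr p"
    unfolding sum using spos by (intro mult_left_mono) auto
  hence "(s powr p * (2 * (1 + z))) powr (2 / p) \<le> (x powr p + y powr p) powr (2 / p)"
    using p spos z0 by (intro powr_mono2) auto
  moreover have "(s powr p * (2 * (1 + z))) powr (2 / p) = s\<^sup>2 * 2 powr (2 / p) * (1 + z) powr (2 / p)"
  proof -
    have "(s powr p) powr (2 / p) = s\<^sup>2"
      using p spos by (simp add: powr_powr powr_numeral)
    moreover have "(2 * (1 + z)) powr (2 / p) = 2 powr (2 / p) * (1 + z) powr (2 / p)"
      using z0 by (subst powr_mult) auto
    ultimately show ?thesis using z0 spos by (subst powr_mult) auto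
  qed
  moreover have "4 powr (1 - 1 / p) * 2 powr (2 / p) = 4"
  proof -
    have "2 powr (2 / p) = 4 powr (1 / p)"
    proof -
      have "(4::real) = 2 powr 2" by simp
      hence "(4::real) powr (1 / p) = 2 powr (2 * (1 / p))" by (metis powr_powr)
      thus ?thesis by simp
    qed
    moreover have "(4::real) powr (1 - 1 / p) * 4 powr (1 / p) = 4 powr (1 - 1 / p + 1 / p)"
      by (rule powr_add[symmetric])
    ultimately show ?thesis by simp
  qed
  moreover have "1 + \<delta> * t\<^sup>2 \<le> (1 + z) powr (2 / p)"
  proof -
    have "1 + (2 / p) * z \<le> (1 + z) powr (2 / p)"
      using p z0 by (intro bern_powr) (auto simp: field_simps)
    moreover have "(2 / p) * z = (p - 1) * t\<^sup>2" using p by (simp add: z_def)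
    moreover have "\<delta> * t\<^sup>2 \<le> (p - 1) * t\<^sup>2" using d by (intro mult_right_mono) auto
    ultimately show ?thesis by linarith
  qed
  ultimately have "4 * s\<^sup>2 * (1 + \<delta> * t\<^sup>2) \<le> 4 powr (1 - 1 / p) * (x powr p + y powr p) powr (2 / p)"
  proof -
    assume a1: "(s powr p * (2 * (1 + z))) powr (2 / p) \<le> (x powr p + y powr p) powr (2 / p)"
      and a2: "(s powr p * (2 * (1 + z))) powr (2 / p) = s\<^sup>2 * 2 powr (2 / p) * (1 + z) powr (2 / p)"
      and a3: "4 powr (1 - 1 / p) * 2 powr (2 / p) = 4"
      and a4: "1 + \<delta> * t\<^sup>2 \<le> (1 + z) powr (2 / p)"
    have "4 * s\<^sup>2 * (1 + \<delta> * t\<^sup>2) \<le> 4 * s\<^sup>2 * (1 + z) powr (2 / p)"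
      using a4 by (intro mult_left_mono) auto
    also have "\<dots> = 4 powr (1 - 1 / p) * (s\<^sup>2 * 2 powr (2 / p) * (1 + z) powr (2 / p))"
      using a3 by (metis mult.assoc mult.commute)
    also have "\<dots> \<le> 4 powr (1 - 1 / p) * (x powr p + y powr p) powr (2 / p)"
      using a1 a2 by (intro mult_left_mono) auto
    finally show ?thesis .
  qed
  thus ?thesis unfolding lhs .
qed

lemma tp:
  fixes p \<delta> x y :: real
  assumes p: "1 \<le> p" "p \<le> 2" and d: "0 \<le> \<delta>" "\<delta> \<le> p - 1" and xy: "0 \<le> y" "0 \<le> x"
  shows "(1 + \<delta>) * (x\<^sup>2 + y\<^sup>2) + 2 * (1 - \<delta>) * (x * y)
         \<le> 4 powr (1 - 1 / p) * (x powr p + y powr p) powr (2 / p)"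
proof (cases "y \<le> x")
  case True thus ?thesis using tp_le[OF p d xy(1) True] by simp
next
  case False thus ?thesis using tp_le[OF p d xy(2), of y] by (simp add: add.commute mult.commute)
qed



definition fu :: "nat \<Rightarrow> (nat set \<Rightarrow> real) \<Rightarrow> nat set \<Rightarrow> real" where
  "fu n a S = (\<Sum>x\<in>cube n. a x * chi S x)"

definition BB :: "real \<Rightarrow> nat \<Rightarrow> (nat set \<Rightarrow> real) \<Rightarrow> (nat set \<Rightarrow> real) \<Rightarrow> real" where
  "BB d n a b = (\<Sum>S\<in>cube n. d ^ card S * fu n a S * fu n b S)"

lemma cube_Suc: "cube (Suc n) = cube n \<union> insert n ` cube n"
  by (simp add: cube_def lessThan_Suc Pow_insert)

lemma finite_cube[simp]: "finite (cube n)"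
  by (simp add: cube_def)

lemma cube_notin: "x \<in> cube n \<Longrightarrow> n \<notin> x"
  by (auto simp: cube_def)

lemma cube_finite_el: "x \<in> cube n \<Longrightarrow> finite x"
  by (auto simp: cube_def intro: finite_subset)

lemma sum_cube_Suc:
  "(\<Sum>x\<in>cube (Suc n). g x) = (\<Sum>x\<in>cube n. g x) + (\<Sum>x\<in>cube n. g (insert n x))"
proof -
  have inj: "inj_on (insert n) (cube n)"
    by (auto simp: inj_on_def cube_def)
  have disj: "cube n \<inter> insert n ` cube n = {}"
    by (auto simp: cube_def)
  show ?thesis unfolding cube_Suc
    by (simp add: sum.union_disjoint[OF _ _ disj] sum.reindex[OF inj])
qed

lemma chi_ins1: "S \<in> cube n \<Longrightarrow> x \<in> cube n \<Longrightarrow> chi S (insert n x) = chi S x"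
  by (simp add: chi_def cube_notin)

lemma chi_ins2: "S \<in> cube n \<Longrightarrow> x \<in> cube n \<Longrightarrow> chi (insert n S) x = chi S x"
  by (simp add: chi_def cube_notin)

lemma chi_ins3: "S \<in> cube n \<Longrightarrow> x \<in> cube n \<Longrightarrow> chi (insert n S) (insert n x) = - chi S x"
proof -
  assume S: "S \<in> cube n" and x: "x \<in> cube n"
  have "insert n S \<inter> insert n x = insert n (S \<inter> x)" by auto
  moreover have "finite (S \<inter> x)" using cube_finite_el[OF S] by simp
  moreover have "n \<notin> S \<inter> x" using cube_notin[OF S] by simp
  ultimately show ?thesis by (simp add: chi_def)
qed

lemma fu_Suc1: "S \<in> cube n \<Longrightarrow> fu (Suc n) a S = fu n a S + fu n (\<lambda>x. a (insert n x)) S"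
  unfolding fu_def sum_cube_Suc by (intro arg_cong2[where f="(+)"] sum.cong) (auto simp: chi_ins1)

lemma fu_Suc2: "S \<in> cube n \<Longrightarrow> fu (Suc n) a (insert n S) = fu n a S - fu n (\<lambda>x. a (insert n x)) S"
  unfolding fu_def sum_cube_Suc by (simp add: chi_ins2 chi_ins3 sum_negf[symmetric] diff_conv_add_uminus cong: sum.cong)

lemma BB_Suc:
  "BB d (Suc n) a a = (1 + d) * (BB d n a a + BB d n (\<lambda>x. a (insert n x)) (\<lambda>x. a (insert n x)))
     + 2 * (1 - d) * BB d n a (\<lambda>x. a (insert n x))"
proof -
  let ?b = "\<lambda>x. a (insert n x)"
  have "BB d (Suc n) a a = (\<Sum>S\<in>cube n. d ^ card S * (fu n a S + fu n ?b S)\<^sup>2 + d ^ Suc (card S) * (fu n a S - fu n ?b S)\<^sup>2)"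
    unfolding BB_def sum_cube_Suc sum.distrib[symmetric]
    by (intro sum.cong refl) (simp add: fu_Suc1 fu_Suc2 cube_notin cube_finite_el power2_eq_square)
  also have "\<dots> = (\<Sum>S\<in>cube n. (1 + d) * (d ^ card S * fu n a S * fu n a S + d ^ card S * fu n ?b S * fu n ?b S) + 2 * (1 - d) * (d ^ card S * fu n a S * fu n ?b S))"
    by (intro sum.cong refl) (simp add: power2_eq_square algebra_simps)
  also have "\<dots> = (1 + d) * (BB d n a a + BB d n ?b ?b) + 2 * (1 - d) * BB d n a ?b"
    by (simp add: BB_def sum.distrib sum_distrib_left[symmetric])
  finally show ?thesis .
qed


lemma BB_CS:
  assumes "d \<ge> 0"
  shows "BB d n a b \<le> sqrt (BB d n a a * BB d n b b)"
proof -
  let ?u = "\<lambda>S. sqrt (d ^ card S) * fu n a S" and ?v = "\<lambda>S. sqrt (d ^ card S) * fu n b S"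
  have e1: "BB d n a b = (\<Sum>S\<in>cube n. ?u S * ?v S)"
    unfolding BB_def using assms by (intro sum.cong refl) (simp add: algebra_simps real_sqrt_mult[symmetric])
  have e2: "BB d n a a = (\<Sum>S\<in>cube n. (?u S)\<^sup>2)" "BB d n b b = (\<Sum>S\<in>cube n. (?v S)\<^sup>2)"
    unfolding BB_def using assms by (auto intro!: sum.cong simp: power2_eq_square algebra_simps real_sqrt_mult[symmetric])
  have "(BB d n a b)\<^sup>2 \<le> BB d n a a * BB d n b b"
    unfolding e1 e2 by (rule Cauchy_Schwarz_ineq_sum)
  hence "sqrt ((BB d n a b)\<^sup>2) \<le> sqrt (BB d n a a * BB d n b b)"
    by (rule real_sqrt_le_mono)
  thus ?thesis by simp
qed

lemma BB_nonneg: "d \<ge> 0 \<Longrightarrow> BB d n a a \<ge> 0"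
  unfolding BB_def by (intro sum_nonneg) (simp add: mult.assoc)

lemma claim:
  fixes d p :: real
  assumes p: "1 \<le> p" "p \<le> 2" and d: "0 \<le> d" "d \<le> p - 1"
  shows "BB d n a a \<le> 4 powr (real n * (1 - 1 / p)) * (\<Sum>x\<in>cube n. \<bar>a x\<bar> powr p) powr (2 / p)"
proof (induction n arbitrary: a)
  case 0
  have c0: "cube 0 = {{}}" by (simp add: cube_def)
  have "(\<bar>a {}\<bar> powr p) powr (2 / p) = (a {})\<^sup>2"
  proof (cases "a {} = 0")
    case True thus ?thesis by simp
  next
    case False
    hence "(\<bar>a {}\<bar> powr p) powr (2 / p) = \<bar>a {}\<bar> powr 2" using p by (simp add: powr_powr)
    also have "\<dots> = (a {})\<^sup>2" using False by (simp add: powr_numeral)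
    finally show ?thesis .
  qed
  thus ?case by (simp add: BB_def fu_def c0 chi_def power2_eq_square)
next
  case (Suc n)
  let ?b = "\<lambda>x. a (insert n x)"
  define c where "c = 4 powr (real n * (1 - 1 / p))"
  define s0 where "s0 = (\<Sum>x\<in>cube n. \<bar>a x\<bar> powr p)"
  define s1 where "s1 = (\<Sum>x\<in>cube n. \<bar>?b x\<bar> powr p)"
  define U0 where "U0 = s0 powr (1 / p)"
  define U1 where "U1 = s1 powr (1 / p)"
  have s0: "s0 \<ge> 0" "s1 \<ge> 0" unfolding s0_def s1_def by (auto intro: sum_nonneg)
  have c0: "c \<ge> 0" by (simp add: c_def)
  have U0: "U0 \<ge> 0" "U1 \<ge> 0" by (simp_all add: U0_def U1_def)
  have sq: "s0 powr (2 / p) = U0\<^sup>2" "s1 powr (2 / p) = U1\<^sup>2"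
    unfolding U0_def U1_def power2_eq_square powr_add[symmetric] by simp_all
  have pw: "U0 powr p = s0" "U1 powr p = s1"
    unfolding U0_def U1_def using p s0 by (simp_all add: powr_powr)
  have X: "BB d n a a \<le> c * U0\<^sup>2" using Suc.IH[of a] by (simp add: c_def s0_def sq(1)[symmetric])
  have Y: "BB d n ?b ?b \<le> c * U1\<^sup>2" using Suc.IH[of ?b] by (simp add: c_def s1_def sq(2)[symmetric])
  have Z: "BB d n a ?b \<le> c * (U0 * U1)"
  proof -
    have "BB d n a ?b \<le> sqrt (BB d n a a * BB d n ?b ?b)" by (rule BB_CS[OF d(1)])
    also have "\<dots> \<le> sqrt ((c * U0\<^sup>2) * (c * U1\<^sup>2))"
      using X Y BB_nonneg[OF d(1)] c0 U0 by (intro real_sqrt_le_mono mult_mono) auto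
    also have "\<dots> = c * (U0 * U1)" using c0 U0
      by (simp add: real_sqrt_mult power2_eq_square)
    finally show ?thesis .
  qed
  have d1: "d \<le> 1" using d p by simp
  have "BB d (Suc n) a a \<le> (1 + d) * (c * U0\<^sup>2 + c * U1\<^sup>2) + 2 * (1 - d) * (c * (U0 * U1))"
    unfolding BB_Suc using X Y Z d d1
    by (intro add_mono mult_left_mono) auto
  also have "\<dots> = c * ((1 + d) * (U0\<^sup>2 + U1\<^sup>2) + 2 * (1 - d) * (U0 * U1))"
    by (simp add: algebra_simps)
  also have "\<dots> \<le> c * (4 powr (1 - 1 / p) * (U0 powr p + U1 powr p) powr (2 / p))"
    using tp[OF p d U0(2) U0(1)] c0 by (intro mult_left_mono) auto
  also have "\<dots> = 4 powr (real (Suc n) * (1 - 1 / p)) * (\<Sum>x\<in>cube (Suc n). \<bar>a x\<bar> powr p) powr (2 / p)"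
    unfolding pw sum_cube_Suc c_def s0_def s1_def
    by (simp add: powr_add[symmetric] algebra_simps)
  finally show ?case .
qed



theorem mainTheorem5:
  fixes n :: nat and T :: "nat set set" and f :: "nat set \<Rightarrow> real"
    and \<delta> \<epsilon> :: real
  assumes "T \<subseteq> cube n" and "T \<noteq> {}"
    and "0 \<le> \<delta>" and "\<delta> \<le> 1" and "0 \<le> \<epsilon>"
    and "\<And>x. x \<in> cube n \<Longrightarrow> x \<notin> T \<Longrightarrow> f x = 0"
    and "\<And>x. x \<in> T \<Longrightarrow> \<bar>f x\<bar> \<le> 1 + \<epsilon>"
  shows "(\<Sum>S\<in>cube n. \<delta> ^ card S * (fourier n f S * 2 ^ n / real (card T))\<^sup>2)
           \<le> (1 + \<epsilon>)\<^sup>2 * (2 ^ n / real (card T)) powr (2 * \<delta>)"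
proof -
  define p where "p = (if \<delta> < 1/2 then 1 / (1 - \<delta>) else 2)"
  have p12: "1 \<le> p" "p \<le> 2" using assms(3,4) by (auto simp: p_def field_simps)
  have dp: "\<delta> \<le> p - 1" using assms(3,4) by (auto simp: p_def field_simps)
  define e where "e = 1 - 1 / p"
  have ed: "e \<le> \<delta>" using assms(3,4) by (auto simp: p_def e_def field_simps)
  have e0: "0 \<le> e" using p12 by (simp add: e_def)
  define m where "m = real (card T)"
  have finT: "finite T" using assms(1) finite_subset finite_cube by blast
  have mpos: "m > 0" using finT assms(2) by (simp add: m_def card_gt_0_iff)
  have mle: "m \<le> 2 ^ n"
  proof -
    have "card T \<le> card (cube n)" using assms(1) by (intro card_mono) auto
    also have "card (cube n) = 2 ^ n" by (simp add: cube_def card_Pow)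
    finally show ?thesis by (simp add: m_def)
  qed
  define N where "N = 2 ^ n / m"
  have N1: "N \<ge> 1" using mle mpos by (simp add: N_def)
  have lhs: "(\<Sum>S\<in>cube n. \<delta> ^ card S * (fourier n f S * 2 ^ n / real (card T))\<^sup>2) = BB \<delta> n f f / m\<^sup>2"
  proof -
    have fe: "fourier n f S * 2 ^ n = fu n f S" for S by (simp add: fourier_def fu_def)
    have "(fourier n f S * 2 ^ n / real (card T))\<^sup>2 = fu n f S * fu n f S / m\<^sup>2" for S
      using fe[of S] by (simp add: power2_eq_square m_def)
    thus ?thesis unfolding BB_def sum_divide_distrib by (simp add: mult.assoc)
  qed
  have sumle: "(\<Sum>x\<in>cube n. \<bar>f x\<bar> powr p) \<le> m * (1 + \<epsilon>) powr p"
  proof -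
    have "(\<Sum>x\<in>cube n. \<bar>f x\<bar> powr p) = (\<Sum>x\<in>T. \<bar>f x\<bar> powr p)"
      using assms(1,6) by (intro sum.mono_neutral_right) auto
    also have "\<dots> \<le> (\<Sum>x\<in>T. (1 + \<epsilon>) powr p)"
      using assms(7) p12 by (intro sum_mono powr_mono2) auto
    finally show ?thesis by (simp add: m_def)
  qed
  have "BB \<delta> n f f \<le> 4 powr (real n * e) * (\<Sum>x\<in>cube n. \<bar>f x\<bar> powr p) powr (2 / p)"
    unfolding e_def by (rule claim[OF p12 assms(3) dp])
  also have "\<dots> \<le> 4 powr (real n * e) * (m * (1 + \<epsilon>) powr p) powr (2 / p)"
    using sumle p12 by (intro mult_left_mono powr_mono2) (auto intro: sum_nonneg)
  also have "(m * (1 + \<epsilon>) powr p) powr (2 / p) = m powr (2 / p) * (1 + \<epsilon>)\<^sup>2"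
    using mpos assms(5) p12 by (simp add: powr_mult powr_powr powr_numeral)
  finally have B: "BB \<delta> n f f \<le> 4 powr (real n * e) * (m powr (2 / p) * (1 + \<epsilon>)\<^sup>2)" .
  have key: "4 powr (real n * e) * m powr (2 / p) / m\<^sup>2 = N powr (2 * e)"
  proof -
    have "(4::real) powr (real n * e) = (2 ^ n) powr (2 * e)"
    proof -
      have "(4::real) powr (real n * e) = (2::real) powr (real n * (2 * e))"
        using powr_powr[of "2::real" 2 "real n * e"] by (simp add: algebra_simps)
      also have "\<dots> = ((2::real) powr real n) powr (2 * e)" by (simp add: powr_powr)
      also have "\<dots> = (2 ^ n) powr (2 * e)" by (simp add: powr_realpow)
      finally show ?thesis .
    qed
    moreover have "m powr (2 / p) / m\<^sup>2 = 1 / m powr (2 * e)"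
    proof -
      have "m\<^sup>2 = m powr 2" using mpos by (simp add: powr_numeral)
      hence "m powr (2 / p) / m\<^sup>2 = m powr (2 / p - 2)" by (simp add: powr_diff)
      also have "2 / p - 2 = - (2 * e)" by (simp add: e_def algebra_simps)
      finally show ?thesis by (simp add: powr_minus_divide)
    qed
    moreover have "N powr (2 * e) = (2 ^ n) powr (2 * e) / m powr (2 * e)"
      unfolding N_def by (rule powr_divide)
    ultimately show ?thesis by (metis times_divide_eq_right mult_1_right)
  qed
  have "BB \<delta> n f f / m\<^sup>2 \<le> (1 + \<epsilon>)\<^sup>2 * (4 powr (real n * e) * m powr (2 / p) / m\<^sup>2)"
    using B mpos by (simp add: divide_right_mono field_simps)
  also have "\<dots> = (1 + \<epsilon>)\<^sup>2 * N powr (2 * e)" by (simp add: key)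
  also have "\<dots> \<le> (1 + \<epsilon>)\<^sup>2 * N powr (2 * \<delta>)"
    using N1 ed by (intro mult_left_mono powr_mono) auto
  finally show ?thesis unfolding lhs N_def m_def .
qed

end
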